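(* For a tree $T$, $\lfloor \mathrm{sp}\rfloor(T)=|V(T)|-\mathrm{diam}(T)-1$.
   Context: All graphs are finite, have at least one vertex, have no loops, and may have multiple (parallel) edges. $\mathrm{diam}$ denotes the diameter (maximum distance between two vertices, distance measured in number of edges). A unique shortest path is a shortest $u$–$v$ path $P$ such that every $u$–$v$ path with the same number of vertices is identical to $P$, where two paths with different edge sequences are different even if their vertex sequences agree; a single vertex is a unique shortest path. The parade number $\mathrm{usp}(G)$ is the largest number of vertices of a unique shortest path in $G$. The spectator number is $\mathrm{sp}(G)=|V(G)|-\mathrm{usp}(G)$. A minor of $H$ is any graph obtained from $H$ by a sequence of: deleting an isolated vertex, deleting an edge, contracting an edge that has no edge parallel to it. The spectator floor $\lfloor \mathrm{sp}\rfloor(G)$ is the minimum of $\mathrm{sp}(H)$ over all graphs $H$ of which $G$ is a minor. *)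

theory Defs
  imports Main
begin

text \<open>Parallel edges are
  allowed (several edges with equal ends).\<close>

type_synonym ('v, 'e) mgraph = "'v set \<times> 'e set \<times> ('e \<Rightarrow> 'v set)"

definition verts :: "('v, 'e) mgraph \<Rightarrow> 'v set" where
  "verts G = fst G"
definition edges :: "('v, 'e) mgraph \<Rightarrow> 'e set" where
  "edges G = fst (snd G)"
definition endpts :: "('v, 'e) mgraph \<Rightarrow> 'e \<Rightarrow> 'v set" where
  "endpts G = snd (snd G)"

definition wf_graph :: "('v, 'e) mgraph \<Rightarrow> bool" where
  "wf_graph G \<longleftrightarrow> finite (verts G) \<and> verts G \<noteq> {} \<and> finite (edges G) \<and>
     (\<forall>e\<in>edges G. endpts G e \<subseteq> verts G \<and> card (endpts G e) = 2)"

definition is_walk :: "('v, 'e) mgraph \<Rightarrow> 'v list \<Rightarrow> 'e list \<Rightarrow> bool" where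
  "is_walk G vs es \<longleftrightarrow> vs \<noteq> [] \<and> set vs \<subseteq> verts G \<and> set es \<subseteq> edges G \<and>
     length vs = length es + 1 \<and>
     (\<forall>i < length es. endpts G (es ! i) = {vs ! i, vs ! Suc i})"

definition is_path :: "('v, 'e) mgraph \<Rightarrow> 'v list \<Rightarrow> 'e list \<Rightarrow> bool" where
  "is_path G vs es \<longleftrightarrow> is_walk G vs es \<and> distinct vs"

definition path_from_to :: "('v, 'e) mgraph \<Rightarrow> 'v \<Rightarrow> 'v \<Rightarrow> 'v list \<Rightarrow> 'e list \<Rightarrow> bool" where
  "path_from_to G u v vs es \<longleftrightarrow> is_path G vs es \<and> hd vs = u \<and> last vs = v"

text \<open>Unique shortest path: a shortest u-v path such that every u-v path with at most
  (hence the same) number of vertices is identical to it (same vertex and edge sequence).\<close>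
definition is_usp :: "('v, 'e) mgraph \<Rightarrow> 'v list \<Rightarrow> 'e list \<Rightarrow> bool" where
  "is_usp G vs es \<longleftrightarrow> path_from_to G (hd vs) (last vs) vs es \<and>
     (\<forall>vs' es'. path_from_to G (hd vs) (last vs) vs' es' \<and> length vs' \<le> length vs
        \<longrightarrow> vs' = vs \<and> es' = es)"

definition usp :: "('v, 'e) mgraph \<Rightarrow> nat" where
  "usp G = Max {length vs | vs es. is_usp G vs es}"

definition sp :: "('v, 'e) mgraph \<Rightarrow> nat" where
  "sp G = card (verts G) - usp G"

definition gdist :: "('v, 'e) mgraph \<Rightarrow> 'v \<Rightarrow> 'v \<Rightarrow> nat" where
  "gdist G u v = (LEAST k. \<exists>vs es. is_walk G vs es \<and> hd vs = u \<and> last vs = v \<and> length es = k)"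

definition diam :: "('v, 'e) mgraph \<Rightarrow> nat" where
  "diam G = Max {gdist G u v | u v. u \<in> verts G \<and> v \<in> verts G}"

definition connected_graph :: "('v, 'e) mgraph \<Rightarrow> bool" where
  "connected_graph G \<longleftrightarrow> (\<forall>u\<in>verts G. \<forall>v\<in>verts G.
     \<exists>vs es. is_walk G vs es \<and> hd vs = u \<and> last vs = v)"

text \<open>A cycle: a path with at least one edge closed up by a further edge (not on the
  path) joining its endpoints; parallel edges thus form cycles of length 2.\<close>
definition has_cycle :: "('v, 'e) mgraph \<Rightarrow> bool" where
  "has_cycle G \<longleftrightarrow> (\<exists>vs es e. is_path G vs es \<and> es \<noteq> [] \<and> e \<in> edges G \<and> e \<notin> set es \<and>
     endpts G e = {hd vs, last vs})"

definition is_tree :: "('v, 'e) mgraph \<Rightarrow> bool" where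
  "is_tree G \<longleftrightarrow> wf_graph G \<and> connected_graph G \<and> \<not> has_cycle G"

definition minor_step :: "('v, 'e) mgraph \<Rightarrow> ('v, 'e) mgraph \<Rightarrow> bool" where
  "minor_step H H' \<longleftrightarrow>
     (\<exists>x\<in>verts H. (\<forall>e\<in>edges H. x \<notin> endpts H e) \<and>
        H' = (verts H - {x}, edges H, endpts H)) \<or>
     (\<exists>e\<in>edges H. H' = (verts H, edges H - {e}, endpts H)) \<or>
     (\<exists>e\<in>edges H. \<exists>u v. endpts H e = {u, v} \<and> u \<noteq> v \<and>
        (\<forall>f\<in>edges H. f \<noteq> e \<longrightarrow> endpts H f \<noteq> endpts H e) \<and>
        H' = (verts H - {v}, edges H - {e},
              \<lambda>f. (\<lambda>w. if w = v then u else w) ` endpts H f))"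

definition graph_iso :: "('v, 'e) mgraph \<Rightarrow> ('w, 'f) mgraph \<Rightarrow> bool" where
  "graph_iso G H \<longleftrightarrow> (\<exists>\<phi> \<psi>. bij_betw \<phi> (verts G) (verts H) \<and> bij_betw \<psi> (edges G) (edges H) \<and>
     (\<forall>e\<in>edges G. endpts H (\<psi> e) = \<phi> ` endpts G e))"

definition is_minor :: "('v, 'e) mgraph \<Rightarrow> ('w, 'f) mgraph \<Rightarrow> bool" where
  "is_minor G H \<longleftrightarrow> (\<exists>H'. (\<lambda>A B. minor_step A B \<and> wf_graph B)\<^sup>*\<^sup>* H H' \<and> graph_iso G H')"

text \<open>Spectator floor; the host graphs H range over all finite graphs, represented
  (up to isomorphism) with natural-number vertices and edges.\<close>
definition spec_floor :: "('v, 'e) mgraph \<Rightarrow> nat" where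
  "spec_floor G = (LEAST s. \<exists>H :: (nat, nat) mgraph. wf_graph H \<and> is_minor G H \<and> s = sp H)"

end

theory Submission
  imports Defs
begin

fun wk :: "('v,'e) mgraph \<Rightarrow> 'v list \<Rightarrow> 'e list \<Rightarrow> bool" where
  "wk G [x] [] = (x \<in> verts G)"
| "wk G (x # y # vs) (e # es) = (x \<in> verts G \<and> e \<in> edges G \<and> endpts G e = {x, y} \<and> wk G (y # vs) es)"
| "wk G _ _ = False"

lemma is_walk_wk: "is_walk G vs es = wk G vs es"
proof (induction vs arbitrary: es)
  case Nil
  then show ?case by (simp add: is_walk_def)
next
  case (Cons x vs)
  show ?case
  proof (cases vs)
    case Nil
    then show ?thesis by (cases es) (auto simp: is_walk_def)
  next
    case (Cons y rest)
    show ?thesis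
    proof (cases es)
      case Nil
      then show ?thesis using Cons by (simp add: is_walk_def)
    next
      case (Cons e es')
      have "is_walk G (x # y # rest) (e # es') \<longleftrightarrow>
        x \<in> verts G \<and> e \<in> edges G \<and> endpts G e = {x, y} \<and> is_walk G (y # rest) es'"
        unfolding is_walk_def by (auto simp: All_less_Suc2)
      then show ?thesis using Cons \<open>vs = y # rest\<close> Cons.IH by simp
    qed
  qed
qed

lemma wk_len: "wk G vs es \<Longrightarrow> length vs = Suc (length es)"
  by (induction G vs es rule: wk.induct) auto

lemma wk_ne: "wk G vs es \<Longrightarrow> vs \<noteq> []"
  by (induction G vs es rule: wk.induct) auto

lemma wk_verts: "wk G vs es \<Longrightarrow> set vs \<subseteq> verts G"
  by (induction G vs es rule: wk.induct) auto

lemma wk_edges: "wk G vs es \<Longrightarrow> set es \<subseteq> edges G"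
  by (induction G vs es rule: wk.induct) auto

lemma wk_endpts: "wk G vs es \<Longrightarrow> f \<in> set es \<Longrightarrow> endpts G f \<subseteq> set vs"
  by (induction G vs es rule: wk.induct) auto

lemma wk_Cons: "wk G (x # vs) es \<Longrightarrow> vs \<noteq> [] \<Longrightarrow> wk G vs (tl es)"
  by (cases vs; cases es) auto

lemma wk_single[simp]: "wk G [x] es \<longleftrightarrow> es = [] \<and> x \<in> verts G"
  by (cases es) auto

lemma wk_join:
  "length vs1 = Suc (length es1) \<Longrightarrow>
   wk G (vs1 @ vs2) (es1 @ e # es2) \<longleftrightarrow>
   wk G vs1 es1 \<and> wk G vs2 es2 \<and> e \<in> edges G \<and> endpts G e = {last vs1, hd vs2}"
proof (induction vs1 arbitrary: es1)
  case Nil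
  then show ?case by simp
next
  case (Cons x vs1)
  show ?case
  proof (cases vs1)
    case Nil
    then have "es1 = []" using Cons.prems by simp
    then show ?thesis using Nil
      by (cases vs2) (auto dest: wk_ne)
  next
    case (Cons y r)
    then obtain f es1' where es1: "es1 = f # es1'" using Cons.prems by (cases es1) auto
    have "length vs1 = Suc (length es1')" using Cons.prems es1 by simp
    note IH = Cons.IH[OF this]
    show ?thesis using IH es1 \<open>vs1 = y # r\<close> by auto
  qed
qed

lemma wk_app:
  "wk G vs1 es1 \<Longrightarrow> wk G vs2 es2 \<Longrightarrow> last vs1 = hd vs2 \<Longrightarrow> wk G (vs1 @ tl vs2) (es1 @ es2)"
proof (induction G vs1 es1 rule: wk.induct)
  case (1 G x)
  then show ?case by (cases vs2) auto
next
  case (2 G x y vs e es)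
  then show ?case by auto
qed auto

lemma wk_rev: "wk G vs es \<Longrightarrow> wk G (rev vs) (rev es)"
proof (induction G vs es rule: wk.induct)
  case (2 G x y vs e es)
  then have w: "wk G (rev vs @ [y]) (rev es)" by simp
  have "wk G ((rev vs @ [y]) @ [x]) (rev es @ e # [])"
    using w 2 wk_len[OF w] by (subst wk_join) (auto simp: insert_commute)
  then show ?case by simp
qed auto

definition reach :: "('v,'e) mgraph \<Rightarrow> 'v \<Rightarrow> 'v \<Rightarrow> bool" where
  "reach G x y \<longleftrightarrow> (\<exists>vs es. wk G vs es \<and> hd vs = x \<and> last vs = y)"

definition gcomp :: "('v,'e) mgraph \<Rightarrow> 'v \<Rightarrow> 'v set" where
  "gcomp G x = {y. reach G x y}"

lemma reach_refl: "x \<in> verts G \<Longrightarrow> reach G x x"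
  unfolding reach_def by (rule exI[of _ "[x]"]) auto

lemma reach_sym: "reach G x y \<Longrightarrow> reach G y x"
  unfolding reach_def
  by (metis wk_rev wk_ne hd_rev last_rev)

lemma reach_trans: "reach G x y \<Longrightarrow> reach G y z \<Longrightarrow> reach G x z"
  unfolding reach_def
proof (elim exE conjE)
  fix vs es vs' es'
  assume a: "wk G vs es" "hd vs = x" "last vs = y" "wk G vs' es'" "hd vs' = y" "last vs' = z"
  have w: "wk G (vs @ tl vs') (es @ es')" using wk_app a by metis
  have "hd (vs @ tl vs') = x" using a wk_ne[OF a(1)] by simp
  moreover have "last (vs @ tl vs') = z"
    using a wk_ne[OF a(4)] by (cases vs') (auto)
  ultimately show "\<exists>vs es. wk G vs es \<and> hd vs = x \<and> last vs = z" using w by blast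
qed

lemma reach_verts: "reach G x y \<Longrightarrow> x \<in> verts G \<and> y \<in> verts G"
  unfolding reach_def by (metis wk_verts wk_ne hd_in_set last_in_set subsetD)

lemma gcomp_sub: "gcomp G x \<subseteq> verts G"
  unfolding gcomp_def using reach_verts by fastforce

lemma wk_set_comp: "wk G vs es \<Longrightarrow> set vs \<subseteq> gcomp G (hd vs)"
proof (induction G vs es rule: wk.induct)
  case (1 G x)
  then show ?case by (simp add: gcomp_def reach_refl)
next
  case (2 G x y vs e es)
  have "reach G x y" unfolding reach_def
    by (rule exI[of _ "[x,y]"], rule exI[of _ "[e]"]) (use 2 wk_verts in fastforce)
  then show ?case using 2 by (auto simp: gcomp_def intro: reach_trans reach_refl)
qed auto

lemma comp_eq: "reach G x y \<Longrightarrow> gcomp G x = gcomp G y"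
  unfolding gcomp_def by (auto intro: reach_sym reach_trans)

lemma comp_disj: "\<not> reach G x y \<Longrightarrow> gcomp G x \<inter> gcomp G y = {}"
  unfolding gcomp_def by (auto intro: reach_trans reach_sym)

lemma wk_distinct_es: "wk G vs es \<Longrightarrow> distinct vs \<Longrightarrow> distinct es"
proof (induction G vs es rule: wk.induct)
  case (2 G x y vs e es)
  have "e \<notin> set es"
  proof
    assume "e \<in> set es"
    then have "endpts G e \<subseteq> set (y # vs)" using wk_endpts 2 by (metis wk.simps(2))
    then show False using 2 by auto
  qed
  then show ?case using 2 by auto
qed auto

lemma wk_drop: "wk G vs es \<Longrightarrow> k < length vs \<Longrightarrow> wk G (drop k vs) (drop k es)"
proof (induction k arbitrary: vs es)
  case (Suc k)
  then obtain x vs' where vs: "vs = x # vs'" by (cases vs) auto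
  then have "vs' \<noteq> []" using Suc.prems by auto
  then have "wk G vs' (tl es)" using wk_Cons Suc.prems vs by metis
  then have "wk G (drop k vs') (drop k (tl es))" using Suc vs by simp
  then show ?case using vs by (simp add: drop_Suc)
qed simp

lemma wk_to_path:
  "wk G vs es \<Longrightarrow> \<exists>vs' es'. wk G vs' es' \<and> distinct vs' \<and> hd vs' = hd vs \<and> last vs' = last vs \<and>
     set vs' \<subseteq> set vs \<and> set es' \<subseteq> set es \<and> length es' \<le> length es"
proof (induction G vs es rule: wk.induct)
  case (1 G x)
  then show ?case by (rule_tac x="[x]" in exI, rule_tac x="[]" in exI) auto
next
  case (2 G x y vs e es)
  then obtain vs' es' where p: "wk G vs' es'" "distinct vs'" "hd vs' = y" "last vs' = last (y # vs)"
    "set vs' \<subseteq> set (y # vs)" "set es' \<subseteq> set es" "length es' \<le> length es" by auto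
  have ne: "vs' \<noteq> []" using p wk_ne by metis
  show ?case
  proof (cases "x \<in> set vs'")
    case False
    have "wk G (x # vs') (e # es')" using p ne 2 by (cases vs') auto
    then show ?thesis using p False ne
      by (rule_tac x="x # vs'" in exI, rule_tac x="e # es'" in exI) (auto simp: last.simps)
  next
    case True
    then obtain k where k: "k < length vs'" "vs' ! k = x" by (metis in_set_conv_nth)
    have w: "wk G (drop k vs') (drop k es')" using wk_drop p k by metis
    have "hd (drop k vs') = x" using k by (simp add: hd_drop_conv_nth)
    moreover have "last (drop k vs') = last vs'" using k by simp
    moreover have "set (drop k vs') \<subseteq> set vs'" "set (drop k es') \<subseteq> set es'"
      by (auto dest: in_set_dropD)
    ultimately show ?thesis using w p ne
      by (rule_tac x="drop k vs'" in exI, rule_tac x="drop k es'" in exI) auto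
  qed
qed auto

lemma gdist_wk: "gdist G u v = (LEAST k. \<exists>vs es. wk G vs es \<and> hd vs = u \<and> last vs = v \<and> length es = k)"
  unfolding gdist_def is_walk_wk ..

lemma gdist_le: "wk G vs es \<Longrightarrow> gdist G (hd vs) (last vs) \<le> length es"
  unfolding gdist_wk by (rule Least_le) blast

lemma gdist_ex: "reach G u v \<Longrightarrow> \<exists>vs es. wk G vs es \<and> hd vs = u \<and> last vs = v \<and> length es = gdist G u v"
  unfolding gdist_wk reach_def by (rule LeastI_ex) blast

definition geo :: "('v,'e) mgraph \<Rightarrow> 'v list \<Rightarrow> 'e list \<Rightarrow> bool" where
  "geo G vs es \<longleftrightarrow> wk G vs es \<and> distinct vs \<and> length es = gdist G (hd vs) (last vs)"

lemma geo_ex: "reach G u v \<Longrightarrow> \<exists>vs es. geo G vs es \<and> hd vs = u \<and> last vs = v"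
proof -
  assume "reach G u v"
  from gdist_ex[OF this] obtain vs es where a: "wk G vs es" "hd vs = u" "last vs = v" "length es = gdist G u v"
    by blast
  from wk_to_path[OF a(1)] obtain vs' es' where b: "wk G vs' es'" "distinct vs'" "hd vs' = hd vs"
    "last vs' = last vs" "length es' \<le> length es" by blast
  have "gdist G u v \<le> length es'" using gdist_le[OF b(1)] a b by simp
  then show ?thesis using a b unfolding geo_def by (rule_tac x=vs' in exI, rule_tac x=es' in exI) auto
qed

lemma geo_single: "x \<in> verts G \<Longrightarrow> geo G [x] []"
  unfolding geo_def using gdist_le[of G "[x]" "[]"] by simp

definition Good :: "nat \<Rightarrow> ('v,'e) mgraph \<Rightarrow> bool" where
  "Good K G \<longleftrightarrow> (\<exists>x\<in>verts G. \<forall>vs es. geo G vs es \<and> hd vs \<in> gcomp G x \<longrightarrow> length vs + K \<le> card (gcomp G x))"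

definition subg :: "('v,'e) mgraph \<Rightarrow> ('v,'e) mgraph \<Rightarrow> bool" where
  "subg G' G \<longleftrightarrow> verts G' \<subseteq> verts G \<and> edges G' \<subseteq> edges G \<and> (\<forall>e\<in>edges G'. endpts G' e = endpts G e)"

lemma subg_wk: "subg G' G \<Longrightarrow> wk G' vs es \<Longrightarrow> wk G vs es"
  by (induction G' vs es rule: wk.induct) (auto simp: subg_def)

lemma subg_reach: "subg G' G \<Longrightarrow> reach G' x y \<Longrightarrow> reach G x y"
  unfolding reach_def using subg_wk by metis

lemma subg_gcomp: "subg G' G \<Longrightarrow> gcomp G' x \<subseteq> gcomp G x"
  unfolding gcomp_def using subg_reach by fastforce

lemma subg_gdist: "subg G' G \<Longrightarrow> reach G' x y \<Longrightarrow> gdist G x y \<le> gdist G' x y"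
  using gdist_ex[of G' x y] gdist_le subg_wk by metis

lemma subg_geo: "subg G' G \<Longrightarrow> geo G vs es \<Longrightarrow> wk G' vs es \<Longrightarrow> geo G' vs es"
  unfolding geo_def using subg_gdist[of G' G "hd vs" "last vs"] gdist_le[of G' vs es]
  by (metis le_antisym reach_def)

lemma is_usp_wk: "is_usp G vs es \<longleftrightarrow> wk G vs es \<and> distinct vs \<and>
   (\<forall>vs' es'. wk G vs' es' \<and> distinct vs' \<and> hd vs' = hd vs \<and> last vs' = last vs \<and> length vs' \<le> length vs
        \<longrightarrow> vs' = vs \<and> es' = es)"
  unfolding is_usp_def path_from_to_def is_path_def is_walk_wk by (simp add: conj_assoc)

lemma usp_geo: "is_usp G vs es \<Longrightarrow> geo G vs es"
proof -
  assume u: "is_usp G vs es"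
  then have w: "wk G vs es" "distinct vs" and
    un: "\<And>vs' es'. wk G vs' es' \<Longrightarrow> distinct vs' \<Longrightarrow> hd vs' = hd vs \<Longrightarrow> last vs' = last vs \<Longrightarrow>
       length vs' \<le> length vs \<Longrightarrow> vs' = vs \<and> es' = es"
    using u[unfolded is_usp_wk] apply -
    apply (erule conjE, assumption)
    apply (erule conjE, erule conjE, assumption)
    apply (erule conjE, erule conjE)
    apply (erule allE, erule allE, erule impE)
    apply (intro conjI; assumption)
    apply assumption
    done
  have le: "gdist G (hd vs) (last vs) \<le> length es" using gdist_le w by metis
  have "\<not> gdist G (hd vs) (last vs) < length es"
  proof
    assume lt: "gdist G (hd vs) (last vs) < length es"
    have "reach G (hd vs) (last vs)" unfolding reach_def by (rule exI[of _ vs], rule exI[of _ es]) (simp add: w(1))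
    from geo_ex[OF this] obtain vs' es' where g: "geo G vs' es'" "hd vs' = hd vs" "last vs' = last vs" by blast
    have g2: "wk G vs' es'" "distinct vs'" "length es' = gdist G (hd vs) (last vs)"
      using g unfolding geo_def by simp_all
    have "length vs' \<le> length vs" using lt wk_len[OF w(1)] wk_len[OF g2(1)] g2(3) by simp
    then have "es' = es" using un g2 g by blast
    then show False using g2 lt by simp
  qed
  then show ?thesis using le w unfolding geo_def by simp
qed

lemma distinct_len_le: "distinct vs \<Longrightarrow> set vs \<subseteq> A \<Longrightarrow> finite A \<Longrightarrow> length vs \<le> card A"
  by (metis card_mono distinct_card)

lemma usp_facts:
  assumes "wf_graph G"
  shows "finite {length vs | vs es. is_usp G vs es}" "\<exists>vs es. is_usp G vs es \<and> length vs = usp G"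
proof -
  let ?S = "{length vs | vs es. is_usp G vs es}"
  have "?S \<subseteq> {..card (verts G)}"
  proof
    fix n assume "n \<in> ?S"
    then obtain vs es where "is_usp G vs es" "n = length vs" by blast
    then have "wk G vs es" "distinct vs" "n = length vs" unfolding is_usp_wk by blast+
    then show "n \<in> {..card (verts G)}"
      using assms distinct_len_le[of vs "verts G"] wk_verts[of G vs es] unfolding wf_graph_def by simp
  qed
  then show f: "finite ?S" using finite_subset by blast
  obtain x where x: "x \<in> verts G" using assms unfolding wf_graph_def by auto
  have one: "\<And>vs' es'. wk G vs' es' \<Longrightarrow> length vs' \<le> 1 \<Longrightarrow> vs' = [hd vs'] \<and> es' = []"
  proof -
    fix vs' es' assume a: "wk G vs' es'" "length vs' \<le> 1"
    then show "vs' = [hd vs'] \<and> es' = []" using wk_len[OF a(1)] by (cases vs') auto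
  qed
  have "is_usp G [x] []" unfolding is_usp_wk using x one by fastforce
  then have "?S \<noteq> {}" by blast
  then have "usp G \<in> ?S" unfolding usp_def using f Max_in by blast
  then show "\<exists>vs es. is_usp G vs es \<and> length vs = usp G" by auto
qed

lemma usp_ge: "wf_graph G \<Longrightarrow> is_usp G vs es \<Longrightarrow> length vs \<le> usp G"
  unfolding usp_def by (rule Max_ge[OF usp_facts(1)]) blast+

lemma Good_sp:
  assumes wf: "wf_graph G" and g: "Good K G"
  shows "K \<le> sp G"
proof -
  obtain vs es where u: "is_usp G vs es" "length vs = usp G" using usp_facts[OF wf] by blast
  have geo: "geo G vs es" using usp_geo u by blast
  obtain x where x: "x \<in> verts G" and gx: "\<And>vs es. geo G vs es \<Longrightarrow> hd vs \<in> gcomp G x \<Longrightarrow> length vs + K \<le> card (gcomp G x)"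
    using g unfolding Good_def by blast
  have fin: "finite (verts G)" using wf wf_graph_def by blast
  have C1: "1 + K \<le> card (gcomp G x)" using gx[OF geo_single[OF x]] x by (simp add: gcomp_def reach_refl)
  have wv: "wk G vs es" "distinct vs" using geo unfolding geo_def by auto
  have "length vs + K \<le> card (verts G)"
  proof (cases "hd vs \<in> gcomp G x")
    case True
    then show ?thesis using gx[OF geo] card_mono[OF fin gcomp_sub, of x] by linarith
  next
    case False
    then have nr: "\<not> reach G x (hd vs)" by (simp add: gcomp_def)
    have "set vs \<subseteq> gcomp G (hd vs)" using wk_set_comp wv by metis
    then have d: "set vs \<inter> gcomp G x = {}" using comp_disj[OF nr] by blast
    have "set vs \<union> gcomp G x \<subseteq> verts G" using wk_verts[OF wv(1)] gcomp_sub[of G x] by blast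
    then have "card (set vs \<union> gcomp G x) \<le> card (verts G)" using card_mono fin by blast
    moreover have "card (set vs \<union> gcomp G x) = card (set vs) + card (gcomp G x)"
      by (rule card_Un_disjoint) (use d finite_subset[OF gcomp_sub fin] in auto)
    moreover have "card (set vs) = length vs" using distinct_card wv by blast
    ultimately show ?thesis using C1 by linarith
  qed
  then show ?thesis unfolding sp_def using u by linarith
qed

lemma triple_simps[simp]: "verts (V, E, f) = V" "edges (V, E, f) = E" "endpts (V, E, f) = f"
  by (simp_all add: verts_def edges_def endpts_def)


lemma isolated_wk: "wk G vs es \<Longrightarrow> x \<in> set vs \<Longrightarrow> \<forall>e\<in>edges G. x \<notin> endpts G e \<Longrightarrow> vs = [x]"
  by (induction G vs es rule: wk.induct) auto

lemma wk_del_vertex: "wk G vs es \<Longrightarrow> x \<notin> set vs \<Longrightarrow> wk (verts G - {x}, edges G, endpts G) vs es"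
  by (induction G vs es rule: wk.induct) auto

lemma subg_del_vertex: "subg (verts G - {x}, edges G, endpts G) G"
  by (simp add: subg_def)

lemma Good_del_vertex:
  assumes wf: "wf_graph G" and iso: "\<forall>e\<in>edges G. x \<notin> endpts G e"
    and g: "Good K (verts G - {x}, edges G, endpts G)"
  shows "Good K G"
proof -
  let ?G' = "(verts G - {x}, edges G, endpts G)"
  obtain x0 where x0: "x0 \<in> verts G - {x}" and
    gx: "\<And>vs es. geo ?G' vs es \<Longrightarrow> hd vs \<in> gcomp ?G' x0 \<Longrightarrow> length vs + K \<le> card (gcomp ?G' x0)"
    using g unfolding Good_def by auto
  have fin: "finite (verts G)" using wf wf_graph_def by blast
  have "\<forall>vs es. geo G vs es \<and> hd vs \<in> gcomp G x0 \<longrightarrow> length vs + K \<le> card (gcomp G x0)"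
  proof (intro allI impI, elim conjE)
    fix vs es assume geo: "geo G vs es" and h: "hd vs \<in> gcomp G x0"
    then obtain ws fs where W: "wk G ws fs" "hd ws = x0" "last ws = hd vs"
      unfolding gcomp_def reach_def by blast
    have wne: "ws \<noteq> []" using wk_ne W by metis
    have xw: "x \<notin> set ws"
    proof
      assume "x \<in> set ws"
      then have "ws = [x]" using isolated_wk W iso by metis
      then show False using W x0 by simp
    qed
    have wv: "wk G vs es" using geo geo_def by blast
    have vne: "vs \<noteq> []" using wk_ne wv by metis
    have xv: "x \<notin> set vs"
    proof
      assume "x \<in> set vs"
      then have "vs = [x]" using isolated_wk wv iso by metis
      then show False using W xw wne last_in_set by (metis list.sel(1))
    qed
    have "reach ?G' x0 (hd vs)" unfolding reach_def using wk_del_vertex[OF W(1) xw] W by blast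
    then have h': "hd vs \<in> gcomp ?G' x0" by (simp add: gcomp_def)
    have geo': "geo ?G' vs es" using subg_geo[OF subg_del_vertex geo wk_del_vertex[OF wv xv]] .
    have "card (gcomp ?G' x0) \<le> card (gcomp G x0)"
      using subg_gcomp[OF subg_del_vertex] finite_subset[OF gcomp_sub fin] card_mono by metis
    then show "length vs + K \<le> card (gcomp G x0)" using gx[OF geo' h'] by linarith
  qed
  then show ?thesis unfolding Good_def using x0 by blast
qed


lemma wk_del_edge: "wk G vs es \<Longrightarrow> e \<notin> set es \<Longrightarrow> wk (verts G, edges G - {e}, endpts G) vs es"
  by (induction G vs es rule: wk.induct) auto

lemma subg_del_edge: "subg (verts G, edges G - {e}, endpts G) G"
  by (simp add: subg_def)

lemma wk_split: "wk G vs es \<Longrightarrow> e \<in> set es \<Longrightarrow>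
  \<exists>vs1 vs2 es1 es2. vs = vs1 @ vs2 \<and> es = es1 @ e # es2 \<and> length vs1 = Suc (length es1)"
proof -
  assume w: "wk G vs es" and e: "e \<in> set es"
  obtain es1 es2 where es: "es = es1 @ e # es2" using e split_list by metis
  have "length vs = Suc (length es)" using wk_len w .
  then show ?thesis using es
    by (rule_tac x="take (Suc (length es1)) vs" in exI, rule_tac x="drop (Suc (length es1)) vs" in exI) auto
qed

lemma geo_split:
  assumes g: "geo G (vs1 @ vs2) (es1 @ e # es2)" and l: "length vs1 = Suc (length es1)"
  shows "geo G vs1 es1 \<and> geo G vs2 es2"
proof -
  have w: "wk G (vs1 @ vs2) (es1 @ e # es2)" and d: "distinct (vs1 @ vs2)"
    and gd: "length (es1 @ e # es2) = gdist G (hd (vs1 @ vs2)) (last (vs1 @ vs2))"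
    using g unfolding geo_def by blast+
  have parts: "wk G vs1 es1" "wk G vs2 es2" "e \<in> edges G" "endpts G e = {last vs1, hd vs2}"
    using w wk_join[OF l] by blast+
  have ne1: "vs1 \<noteq> []" and ne2: "vs2 \<noteq> []" using parts wk_ne by metis+
  have hd: "hd (vs1 @ vs2) = hd vs1" using ne1 by simp
  have lst: "last (vs1 @ vs2) = last vs2" using ne2 by simp
  have g1: "gdist G (hd vs1) (last vs1) = length es1"
  proof (rule ccontr)
    assume "gdist G (hd vs1) (last vs1) \<noteq> length es1"
    then have lt: "gdist G (hd vs1) (last vs1) < length es1" using gdist_le parts(1) by (metis le_neq_implies_less)
    have "reach G (hd vs1) (last vs1)" unfolding reach_def
      by (rule exI[of _ vs1], rule exI[of _ es1]) (simp add: parts(1))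
    from gdist_ex[OF this] obtain rs fs where R: "wk G rs fs" "hd rs = hd vs1" "last rs = last vs1"
      "length fs = gdist G (hd vs1) (last vs1)" by blast
    have "wk G (rs @ vs2) (fs @ e # es2)" using wk_join[OF wk_len[OF R(1)]] R parts by simp
    moreover have "hd (rs @ vs2) = hd (vs1 @ vs2)" using R wk_ne hd by (metis hd_append)
    moreover have "last (rs @ vs2) = last (vs1 @ vs2)" using ne2 by simp
    ultimately have "gdist G (hd (vs1 @ vs2)) (last (vs1 @ vs2)) \<le> length (fs @ e # es2)"
      using gdist_le by metis
    then show False using gd lt R(4) by simp
  qed
  have g2: "gdist G (hd vs2) (last vs2) = length es2"
  proof (rule ccontr)
    assume "gdist G (hd vs2) (last vs2) \<noteq> length es2"
    then have lt: "gdist G (hd vs2) (last vs2) < length es2" using gdist_le parts(2) by (metis le_neq_implies_less)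
    have "reach G (hd vs2) (last vs2)" unfolding reach_def
      by (rule exI[of _ vs2], rule exI[of _ es2]) (simp add: parts(2))
    from gdist_ex[OF this] obtain rs fs where R: "wk G rs fs" "hd rs = hd vs2" "last rs = last vs2"
      "length fs = gdist G (hd vs2) (last vs2)" by blast
    have rne: "rs \<noteq> []" using R wk_ne by metis
    have "wk G (vs1 @ rs) (es1 @ e # fs)" using wk_join[OF l] R parts by simp
    moreover have "hd (vs1 @ rs) = hd (vs1 @ vs2)" using ne1 by simp
    moreover have "last (vs1 @ rs) = last (vs1 @ vs2)" using ne2 rne R by simp
    ultimately have "gdist G (hd (vs1 @ vs2)) (last (vs1 @ vs2)) \<le> length (es1 @ e # fs)"
      using gdist_le by metis
    then show False using gd lt R(4) by simp
  qed
  show ?thesis using parts d g1 g2 unfolding geo_def by simp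
qed

lemma card_le_comp:
  assumes "finite (verts G)" "set vs \<subseteq> gcomp G x" "distinct vs"
  shows "length vs \<le> card (gcomp G x)"
  using assms distinct_len_le finite_subset[OF gcomp_sub] by metis

lemma subg_gcomp_sub: "subg G' G \<Longrightarrow> reach G x a \<Longrightarrow> gcomp G' a \<subseteq> gcomp G x"
  unfolding gcomp_def using subg_reach reach_trans by (metis mem_Collect_eq subsetI)

lemma gcomp_mem_eq: "y \<in> gcomp G x \<Longrightarrow> gcomp G y = gcomp G x"
  unfolding gcomp_def using comp_eq[of G x y] by (simp add: gcomp_def)

lemma gcomp_notin_disj: "y \<notin> gcomp G x \<Longrightarrow> gcomp G x \<inter> gcomp G y = {}"
  unfolding gcomp_def using comp_disj[of G x y] by (simp add: gcomp_def)

lemma wk_reach_hd: "wk G vs es \<Longrightarrow> y \<in> set vs \<Longrightarrow> reach G (hd vs) y"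
  using wk_set_comp unfolding gcomp_def by blast

lemma Good_del_edge:
  assumes wf: "wf_graph G" and eE: "e \<in> edges G"
    and g: "Good K (verts G, edges G - {e}, endpts G)"
  shows "Good K G"
proof -
  let ?G' = "(verts G, edges G - {e}, endpts G)"
  have sg: "subg ?G' G" by (rule subg_del_edge)
  obtain x0 where x0: "x0 \<in> verts G" and
    gx: "\<And>vs es. geo ?G' vs es \<Longrightarrow> hd vs \<in> gcomp ?G' x0 \<Longrightarrow> length vs + K \<le> card (gcomp ?G' x0)"
    using g unfolding Good_def by auto
  have fin: "finite (verts G)" using wf wf_graph_def by blast
  have fin': "finite (verts ?G')" using fin by simp
  let ?C = "gcomp G x0" and ?C' = "gcomp ?G' x0"
  have finC: "finite ?C" using finite_subset[OF gcomp_sub fin] .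
  have C'C: "?C' \<subseteq> ?C" using subg_gcomp[OF sg] .
  have C1: "1 + K \<le> card ?C'"
    using gx[OF geo_single, of x0] x0 by (simp add: gcomp_def reach_refl)
  have "\<forall>vs es. geo G vs es \<and> hd vs \<in> ?C \<longrightarrow> length vs + K \<le> card ?C"
  proof (intro allI impI, elim conjE)
    fix vs es assume geo: "geo G vs es" and h: "hd vs \<in> ?C"
    have wv: "wk G vs es" "distinct vs" "length es = gdist G (hd vs) (last vs)"
      using geo unfolding geo_def by blast+
    have vne: "vs \<noteq> []" using wk_ne wv by metis
    let ?a = "hd vs" and ?b = "last vs"
    have xa: "reach G x0 ?a" using h unfolding gcomp_def by simp
    have AC: "\<And>z. z \<in> set vs \<Longrightarrow> gcomp ?G' z \<subseteq> ?C"
    proof -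
      fix z assume "z \<in> set vs"
      then have "reach G ?a z" using wk_reach_hd wv(1) by metis
      then have "reach G x0 z" using xa reach_trans by metis
      then show "gcomp ?G' z \<subseteq> ?C" using subg_gcomp_sub[OF sg] by metis
    qed
    have aset: "?a \<in> set vs" using vne by simp
    show "length vs + K \<le> card ?C"
    proof (cases "reach ?G' ?a ?b")
      case True
      from geo_ex[OF this] obtain qs fs where Q: "geo ?G' qs fs" "hd qs = ?a" "last qs = ?b" by blast
      have qw: "wk ?G' qs fs" "distinct qs" "length fs = gdist ?G' ?a ?b" using Q unfolding geo_def by auto
      have "gdist G ?a ?b \<le> gdist ?G' ?a ?b" using subg_gdist[OF sg True] .
      then have lenQ: "length vs \<le> length qs" using wk_len[OF wv(1)] wk_len[OF qw(1)] wv(3) qw(3) by simp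
      show ?thesis
      proof (cases "?a \<in> ?C'")
        case True
        have "length qs + K \<le> card ?C'" using gx[OF Q(1)] Q(2) True by simp
        moreover have "card ?C' \<le> card ?C" using C'C finC card_mono by blast
        ultimately show ?thesis using lenQ by linarith
      next
        case False
        have A: "gcomp ?G' ?a \<subseteq> ?C" using AC[OF aset] .
        have disj: "?C' \<inter> gcomp ?G' ?a = {}" using gcomp_notin_disj[OF False] .
        have qA: "set qs \<subseteq> gcomp ?G' ?a" using wk_set_comp[OF qw(1)] Q(2) by simp
        have "length qs \<le> card (gcomp ?G' ?a)" using card_le_comp[OF fin' qA qw(2)] .
        moreover have "card (?C' \<union> gcomp ?G' ?a) = card ?C' + card (gcomp ?G' ?a)"
          by (rule card_Un_disjoint) (use disj finite_subset[OF C'C finC] finite_subset[OF A finC] in auto)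
        moreover have "card (?C' \<union> gcomp ?G' ?a) \<le> card ?C"
          by (rule card_mono[OF finC]) (use A C'C in blast)
        ultimately show ?thesis using lenQ C1 by linarith
      qed
    next
      case False
      have "e \<in> set es"
      proof (rule ccontr)
        assume "e \<notin> set es"
        then have "wk ?G' vs es" using wk_del_edge[OF wv(1)] by blast
        then have "reach ?G' ?a ?b" unfolding reach_def by blast
        then show False using False by blast
      qed
      from wk_split[OF wv(1) this] obtain vs1 vs2 es1 es2 where sp: "vs = vs1 @ vs2" "es = es1 @ e # es2"
        "length vs1 = Suc (length es1)" by blast
      have gs: "geo G vs1 es1 \<and> geo G vs2 es2" using geo_split[of G vs1 vs2 es1 e es2 ] geo sp by blast
      have gs1: "geo G vs1 es1" and gs2: "geo G vs2 es2" using gs by blast+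
      have de: "distinct es" using wk_distinct_es wv by metis
      have ne1': "e \<notin> set es1" and ne2': "e \<notin> set es2" using de sp by auto
      have "wk G vs1 es1" using gs1 unfolding geo_def by blast
      then have w1: "wk ?G' vs1 es1" using wk_del_edge[OF _ ne1'] by blast
      have "wk G vs2 es2" using gs2 unfolding geo_def by blast
      then have w2: "wk ?G' vs2 es2" using wk_del_edge[OF _ ne2'] by blast
      have g1: "geo ?G' vs1 es1" using subg_geo[OF sg gs1 w1] .
      have g2: "geo ?G' vs2 es2" using subg_geo[OF sg gs2 w2] .
      have ne1: "vs1 \<noteq> []" using w1 wk_ne by metis
      have ne2: "vs2 \<noteq> []" using w2 wk_ne by metis
      have ha: "hd vs1 = ?a" using sp ne1 by simp
      have lb: "last vs2 = ?b" using sp ne2 by simp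
      let ?A1 = "gcomp ?G' (hd vs1)" and ?A2 = "gcomp ?G' (hd vs2)"
      have s1: "set vs1 \<subseteq> ?A1" using wk_set_comp[OF w1] .
      have s2: "set vs2 \<subseteq> ?A2" using wk_set_comp[OF w2] .
      have r2: "reach ?G' (hd vs2) ?b" unfolding reach_def
        by (rule exI[of _ vs2], rule exI[of _ es2]) (simp add: w2 lb)
      have nr12: "\<not> reach ?G' (hd vs1) (hd vs2)"
      proof
        assume "reach ?G' (hd vs1) (hd vs2)"
        then have "reach ?G' ?a ?b" using reach_trans[OF _ r2] ha by metis
        then show False using False by blast
      qed
      have d12: "?A1 \<inter> ?A2 = {}" using comp_disj[OF nr12] .
      have A1C: "?A1 \<subseteq> ?C" using AC[OF aset] ha by simp
      have hv2: "hd vs2 \<in> set vs" using sp ne2 by simp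
      have A2C: "?A2 \<subseteq> ?C" using AC[OF hv2] .
      have fA1: "finite ?A1" using finite_subset[OF A1C finC] .
      have fA2: "finite ?A2" using finite_subset[OF A2C finC] .
      have fC': "finite ?C'" using finite_subset[OF C'C finC] .
      have l1: "length vs1 \<le> card ?A1" using card_le_comp[OF fin' s1] g1 unfolding geo_def by blast
      have l2: "length vs2 \<le> card ?A2" using card_le_comp[OF fin' s2] g2 unfolding geo_def by blast
      have lv: "length vs = length vs1 + length vs2" using sp by simp
      have cU: "card (?A1 \<union> ?A2) = card ?A1 + card ?A2" using card_Un_disjoint[OF fA1 fA2 d12] .
      have cUC: "card (?A1 \<union> ?A2) \<le> card ?C" by (rule card_mono[OF finC]) (use A1C A2C in blast)
      show ?thesis
      proof (cases "hd vs1 \<in> ?C'")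
        case True
        then have eq: "?C' = ?A1" using gcomp_mem_eq by metis
        have "length vs1 + K \<le> card ?A1" using gx[OF g1 True] eq by simp
        then show ?thesis using cU cUC l2 lv by linarith
      next
        case F1: False
        show ?thesis
        proof (cases "hd vs2 \<in> ?C'")
          case True
          then have eq: "?C' = ?A2" using gcomp_mem_eq by metis
          have "length vs2 + K \<le> card ?A2" using gx[OF g2 True] eq by simp
          then show ?thesis using cU cUC l1 lv by linarith
        next
          case F2: False
          have da: "?C' \<inter> ?A1 = {}" using gcomp_notin_disj[OF F1] .
          have db: "?C' \<inter> ?A2 = {}" using gcomp_notin_disj[OF F2] .
          have "card (?C' \<union> (?A1 \<union> ?A2)) = card ?C' + card (?A1 \<union> ?A2)"
            by (rule card_Un_disjoint) (use da db fC' fA1 fA2 in auto)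
          moreover have "card (?C' \<union> (?A1 \<union> ?A2)) \<le> card ?C"
            by (rule card_mono[OF finC]) (use A1C A2C C'C in blast)
          ultimately show ?thesis using cU l1 l2 lv C1 by linarith
        qed
      qed
    qed
  qed
  then show ?thesis unfolding Good_def using x0 by blast
qed


definition contr :: "('v,'e) mgraph \<Rightarrow> 'e \<Rightarrow> 'v \<Rightarrow> 'v \<Rightarrow> ('v,'e) mgraph" where
  "contr G e u v = (verts G - {v}, edges G - {e}, \<lambda>f. (\<lambda>w. if w = v then u else w) ` endpts G f)"

lemma contr_simps[simp]: "verts (contr G e u v) = verts G - {v}" "edges (contr G e u v) = edges G - {e}"
  "endpts (contr G e u v) f = (\<lambda>w. if w = v then u else w) ` endpts G f"
  by (simp_all add: contr_def)

lemma wk_cons: "wk G vs es \<Longrightarrow> x \<in> verts G \<Longrightarrow> f \<in> edges G \<Longrightarrow> endpts G f = {x, hd vs} \<Longrightarrow> wk G (x # vs) (f # es)"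
  by (cases vs) (auto dest: wk_ne)

lemma map_wk:
  "u \<in> verts G \<Longrightarrow> u \<noteq> v \<Longrightarrow> e \<in> edges G \<Longrightarrow> endpts G e = {u, v} \<Longrightarrow> wk G vs es \<Longrightarrow>
   \<exists>vs' es'. wk (contr G e u v) vs' es' \<and> hd vs' = (if hd vs = v then u else hd vs) \<and>
      last vs' = (if last vs = v then u else last vs)"
proof (induction G vs es rule: wk.induct)
  case (1 G x)
  then show ?case
    by (rule_tac x="[if x = v then u else x]" in exI, rule_tac x="[]" in exI) auto
next
  case (2 G x y vs f es)
  then obtain vs' es' where IH: "wk (contr G e u v) vs' es'" "hd vs' = (if y = v then u else y)"
    "last vs' = (if last (y # vs) = v then u else last (y # vs))" by auto
  show ?case
  proof (cases "f = e")
    case True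
    then have "(if x = v then u else x) = (if y = v then u else y)" using 2 by (auto simp: doubleton_eq_iff)
    then show ?thesis using IH by (rule_tac x=vs' in exI, rule_tac x=es' in exI) auto
  next
    case False
    have "wk (contr G e u v) ((if x = v then u else x) # vs') (f # es')"
      by (rule wk_cons) (use IH 2 False in auto)
    then show ?thesis using IH wk_ne[OF IH(1)]
      by (rule_tac x="(if x = v then u else x) # vs'" in exI, rule_tac x="f # es'" in exI) auto
  qed
qed auto

lemma sig_eq: "(if a = v then u else a) = (if b = v then u else b) \<Longrightarrow> a \<noteq> b \<Longrightarrow>
   {a, b} = {u, v} \<and> (if a = v then u else a) = u"
  by (auto split: if_splits)

lemma lift_wk:
  assumes wf: "wf_graph G" and eE: "e \<in> edges G" and ee: "endpts G e = {u, v}" and uv: "u \<noteq> v"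
  shows "wk (contr G e u v) vs' es' \<Longrightarrow> distinct vs' \<Longrightarrow> a \<in> verts G \<Longrightarrow> b \<in> verts G \<Longrightarrow>
    (if a = v then u else a) = hd vs' \<Longrightarrow> (if b = v then u else b) = last vs' \<Longrightarrow>
    \<exists>vs es. wk G vs es \<and> hd vs = a \<and> last vs = b \<and> length es \<le> length es' + (if u \<in> set vs' then 1 else 0)"
proof (induction vs' arbitrary: es' a)
  case Nil
  then show ?case by (auto dest: wk_ne)
next
  case (Cons x' rest)
  show ?case
  proof (cases rest)
    case Nil
    then have es': "es' = []" using Cons.prems(1) by simp
    have sa: "(if a = v then u else a) = (if b = v then u else b)" using Cons.prems Nil by simp
    show ?thesis
    proof (cases "a = b")
      case True
      then show ?thesis using Cons.prems by (rule_tac x="[a]" in exI, rule_tac x="[]" in exI) auto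
    next
      case False
      from sig_eq[OF sa False] have ab: "{a, b} = {u, v}" and xu: "x' = u" using Cons.prems by auto
      have "wk G [a, b] [e]" using eE ee ab Cons.prems by auto
      then show ?thesis using xu es' by (rule_tac x="[a, b]" in exI, rule_tac x="[e]" in exI) auto
    qed
  next
    case (Cons y' rest2)
    note rest = this
    obtain f es2 where es': "es' = f # es2" using Cons.prems(1) rest by (cases es') auto
    have wk': "x' \<in> verts G - {v}" "f \<in> edges G - {e}"
      "(\<lambda>w. if w = v then u else w) ` endpts G f = {x', y'}" "wk (contr G e u v) (y' # rest2) es2"
      using Cons.prems(1) rest es' by auto
    have xy: "x' \<noteq> y'" using Cons.prems(2) rest by auto
    have fE: "f \<in> edges G" using wk' by blast
    have "card (endpts G f) = 2" "endpts G f \<subseteq> verts G" using wf fE unfolding wf_graph_def by blast+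
    then obtain p q where pq: "endpts G f = {p, q}" "p \<noteq> q" "p \<in> verts G" "q \<in> verts G"
      by (metis card_2_iff insert_subset)
    obtain p0 q0 where pq0: "endpts G f = {p0, q0}" "(if p0 = v then u else p0) = x'"
      "(if q0 = v then u else q0) = y'" "p0 \<in> verts G" "q0 \<in> verts G"
    proof -
      have "{(if p = v then u else p), (if q = v then u else q)} = {x', y'}" using wk'(3) pq(1) by (simp only: image_insert image_empty)
      then have "((if p = v then u else p) = x' \<and> (if q = v then u else q) = y') \<or>
                 ((if p = v then u else p) = y' \<and> (if q = v then u else q) = x')"
        by (rule iffD1[OF doubleton_eq_iff])
      then show ?thesis
      proof
        assume "(if p = v then u else p) = x' \<and> (if q = v then u else q) = y'"
        then show ?thesis using that[of p q] pq by blast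
      next
        assume "(if p = v then u else p) = y' \<and> (if q = v then u else q) = x'"
        moreover have "endpts G f = {q, p}" using pq(1) by (simp add: insert_commute)
        ultimately show ?thesis using that[of q p] pq by blast
      qed
    qed
    have d2: "distinct (y' # rest2)" using Cons.prems(2) rest by simp
    from Cons.IH[unfolded rest, OF wk'(4) d2 pq0(5) Cons.prems(4)] pq0(3) Cons.prems(6) rest
    obtain ws fs where W: "wk G ws fs" "hd ws = q0" "last ws = b"
      "length fs \<le> length es2 + (if u \<in> set (y' # rest2) then 1 else 0)" by auto
    have wne: "ws \<noteq> []" using wk_ne W(1) by metis
    show ?thesis
    proof (cases "a = p0")
      case True
      have "wk G (a # ws) (f # fs)" by (rule wk_cons) (use W True pq0 fE Cons.prems(3) in auto)
      then show ?thesis using W wne es' rest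
        by (rule_tac x="a # ws" in exI, rule_tac x="f # fs" in exI) (auto split: if_splits)
    next
      case False
      have sa: "(if a = v then u else a) = (if p0 = v then u else p0)" using pq0(2) Cons.prems(5) by simp
      from sig_eq[OF sa False] have ap: "{a, p0} = {u, v}" and xu: "x' = u" using Cons.prems(5) by auto
      have un: "u \<notin> set (y' # rest2)" using Cons.prems(2) rest xu by auto
      have w1: "wk G (p0 # ws) (f # fs)" by (rule wk_cons) (use W pq0 fE in auto)
      have "wk G (a # p0 # ws) (e # f # fs)" by (rule wk_cons) (use w1 ap ee eE Cons.prems(3) in auto)
      then show ?thesis using W wne es' rest un xu
        by (rule_tac x="a # p0 # ws" in exI, rule_tac x="e # f # fs" in exI) auto
    qed
  qed
qed

lemma Good_contr:
  assumes wf: "wf_graph G" and eE: "e \<in> edges G" and ee: "endpts G e = {u, v}" and uv: "u \<noteq> v"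
    and g: "Good K (contr G e u v)"
  shows "Good K G"
proof -
  let ?G' = "contr G e u v"
  have uV: "u \<in> verts G" and vV: "v \<in> verts G" using wf eE ee unfolding wf_graph_def by blast+
  obtain x0 where x0: "x0 \<in> verts G - {v}" and
    gx: "\<And>vs es. geo ?G' vs es \<Longrightarrow> hd vs \<in> gcomp ?G' x0 \<Longrightarrow> length vs + K \<le> card (gcomp ?G' x0)"
    using g unfolding Good_def by auto
  have fin: "finite (verts G)" using wf wf_graph_def by blast
  let ?C = "gcomp G x0" and ?C' = "gcomp ?G' x0"
  have finC: "finite ?C" using finite_subset[OF gcomp_sub fin] .
  have sx0: "(if x0 = v then u else x0) = x0" using x0 by simp
  have C'C: "?C' \<subseteq> ?C"
  proof
    fix y assume "y \<in> ?C'"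
    then have r: "reach ?G' x0 y" unfolding gcomp_def by simp
    then have yV: "y \<in> verts G - {v}" using reach_verts[OF r] by simp
    from geo_ex[OF r] obtain qs fs where Q: "geo ?G' qs fs" "hd qs = x0" "last qs = y" by blast
    have qq: "wk ?G' qs fs" "distinct qs" using Q unfolding geo_def by blast+
    have "\<exists>ws gs. wk G ws gs \<and> hd ws = x0 \<and> last ws = y \<and> length gs \<le> length fs + (if u \<in> set qs then 1 else 0)"
      by (rule lift_wk[OF wf eE ee uv qq]) (use x0 yV Q in auto)
    then obtain ws gs where "wk G ws gs" "hd ws = x0" "last ws = y" by blast
    then have "reach G x0 y" unfolding reach_def by blast
    then show "y \<in> ?C" unfolding gcomp_def by simp
  qed
  have finC': "finite ?C'" using finite_subset[OF C'C finC] .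
  have C1: "1 + K \<le> card ?C'"
    using gx[OF geo_single, of x0] x0 by (simp add: gcomp_def reach_refl)
  have "\<forall>vs es. geo G vs es \<and> hd vs \<in> ?C \<longrightarrow> length vs + K \<le> card ?C"
  proof (intro allI impI, elim conjE)
    fix vs es assume geo: "geo G vs es" and h: "hd vs \<in> ?C"
    have wv: "wk G vs es" "distinct vs" "length es = gdist G (hd vs) (last vs)"
      using geo unfolding geo_def by blast+
    have vne: "vs \<noteq> []" using wk_ne wv by metis
    let ?a = "hd vs" and ?b = "last vs"
    have aV: "?a \<in> verts G" and bV: "?b \<in> verts G" using wk_verts[OF wv(1)] vne by auto
    let ?sa = "if ?a = v then u else ?a" and ?sb = "if ?b = v then u else ?b"
    from map_wk[OF uV uv eE ee wv(1)] obtain ms ns where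
      M: "wk ?G' ms ns" "hd ms = ?sa" "last ms = ?sb" by blast
    have rab: "reach ?G' ?sa ?sb" unfolding reach_def using M by blast
    obtain ws fs where W: "wk G ws fs" "hd ws = x0" "last ws = ?a" using h unfolding gcomp_def reach_def by blast
    from map_wk[OF uV uv eE ee W(1)] obtain ms2 ns2 where
      M2: "wk ?G' ms2 ns2" "hd ms2 = x0" "last ms2 = ?sa" using sx0 W by auto
    have rxa: "reach ?G' x0 ?sa" unfolding reach_def using M2 by blast
    from geo_ex[OF rab] obtain qs gs where Q: "geo ?G' qs gs" "hd qs = ?sa" "last qs = ?sb" by blast
    have qw: "wk ?G' qs gs" "distinct qs" using Q unfolding geo_def by blast+
    have qC': "hd qs \<in> ?C'" using rxa Q(2) unfolding gcomp_def by simp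
    have gQ: "length qs + K \<le> card ?C'" using gx[OF Q(1) qC'] .
    from lift_wk[OF wf eE ee uv qw aV bV] Q
    obtain ls hs where L: "wk G ls hs" "hd ls = ?a" "last ls = ?b"
      "length hs \<le> length gs + (if u \<in> set qs then 1 else 0)" by auto
    have "gdist G ?a ?b \<le> length hs" using gdist_le[OF L(1)] L by simp
    then have lenP: "length es \<le> length gs + (if u \<in> set qs then 1 else 0)" using wv(3) L(4) by simp
    have lv: "length vs = Suc (length es)" using wk_len[OF wv(1)] .
    have lq: "length qs = Suc (length gs)" using wk_len[OF qw(1)] .
    show "length vs + K \<le> card ?C"
    proof (cases "u \<in> set qs")
      case True
      have "set qs \<subseteq> gcomp ?G' (hd qs)" using wk_set_comp[OF qw(1)] .
      also have "gcomp ?G' (hd qs) = ?C'" using gcomp_mem_eq[OF qC'] .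
      finally have uC': "u \<in> ?C'" using True by blast
      have vC': "v \<notin> ?C'" using gcomp_sub[of ?G' x0] by auto
      have uC: "u \<in> ?C" using uC' C'C by blast
      have "reach G u v" unfolding reach_def
        by (rule exI[of _ "[u, v]"], rule exI[of _ "[e]"]) (use uV vV eE ee in auto)
      then have vC: "v \<in> ?C" using uC reach_trans unfolding gcomp_def by (metis mem_Collect_eq)
      have "card (insert v ?C') \<le> card ?C" by (rule card_mono[OF finC]) (use vC C'C in blast)
      then have "card ?C' + 1 \<le> card ?C" using vC' finC' by simp
      then show ?thesis using lenP True lv lq gQ by simp
    next
      case False
      have "card ?C' \<le> card ?C" using card_mono[OF finC C'C] .
      then show ?thesis using lenP False lv lq gQ by simp
    qed
  qed
  then show ?thesis unfolding Good_def using x0 by blast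
qed


lemma Good_step:
  assumes wf: "wf_graph G" and ms: "minor_step G G'" and g: "Good K G'"
  shows "Good K G"
proof -
  consider (V) x where "x \<in> verts G" "\<forall>e\<in>edges G. x \<notin> endpts G e" "G' = (verts G - {x}, edges G, endpts G)"
    | (E) e where "e \<in> edges G" "G' = (verts G, edges G - {e}, endpts G)"
    | (C) e u v where "e \<in> edges G" "endpts G e = {u, v}" "u \<noteq> v"
        "G' = (verts G - {v}, edges G - {e}, \<lambda>f. (\<lambda>w. if w = v then u else w) ` endpts G f)"
    using ms unfolding minor_step_def by blast
  then show ?thesis
  proof cases
    case V
    then show ?thesis using Good_del_vertex[OF wf V(2)] g by simp
  next
    case E
    then show ?thesis using Good_del_edge[OF wf E(1)] g by simp
  next
    case C
    then have "G' = contr G e u v" by (simp add: contr_def)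
    then show ?thesis using Good_contr[OF wf C(1,2,3)] g by simp
  qed
qed

lemma Good_rtranclp:
  "(\<lambda>A B. minor_step A B \<and> wf_graph B)\<^sup>*\<^sup>* A B \<Longrightarrow> wf_graph A \<Longrightarrow> Good K B \<Longrightarrow> Good K A"
proof (induction rule: converse_rtranclp_induct)
  case base
  then show ?case by simp
next
  case (step y z)
  then show ?case using Good_step by blast
qed

lemma wf_rtranclp:
  "(\<lambda>A B. minor_step A B \<and> wf_graph B)\<^sup>*\<^sup>* A B \<Longrightarrow> wf_graph A \<Longrightarrow> wf_graph B"
  by (induction rule: rtranclp_induct) auto


definition iso_maps :: "('v,'e) mgraph \<Rightarrow> ('w,'f) mgraph \<Rightarrow> ('v \<Rightarrow> 'w) \<Rightarrow> ('e \<Rightarrow> 'f) \<Rightarrow> bool" where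
  "iso_maps G H \<phi> \<psi> \<longleftrightarrow> bij_betw \<phi> (verts G) (verts H) \<and> bij_betw \<psi> (edges G) (edges H) \<and>
     (\<forall>e\<in>edges G. endpts H (\<psi> e) = \<phi> ` endpts G e)"

lemma graph_iso_maps: "graph_iso G H \<longleftrightarrow> (\<exists>\<phi> \<psi>. iso_maps G H \<phi> \<psi>)"
  unfolding graph_iso_def iso_maps_def ..

lemma iso_wk: "iso_maps G H \<phi> \<psi> \<Longrightarrow> wk G vs es \<Longrightarrow> wk H (map \<phi> vs) (map \<psi> es)"
proof (induction G vs es rule: wk.induct)
  case (1 G x)
  then show ?case unfolding iso_maps_def bij_betw_def by auto
next
  case (2 G x y vs e es)
  then show ?case unfolding iso_maps_def bij_betw_def by auto
qed auto

lemma iso_sym: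
  assumes wf: "wf_graph G" and i: "iso_maps G H \<phi> \<psi>"
  shows "iso_maps H G (inv_into (verts G) \<phi>) (inv_into (edges G) \<psi>)"
proof -
  have b1: "bij_betw \<phi> (verts G) (verts H)" and b2: "bij_betw \<psi> (edges G) (edges H)"
    and en: "\<forall>e\<in>edges G. endpts H (\<psi> e) = \<phi> ` endpts G e" using i unfolding iso_maps_def by blast+
  have "\<forall>f\<in>edges H. endpts G (inv_into (edges G) \<psi> f) = inv_into (verts G) \<phi> ` endpts H f"
  proof
    fix f assume f: "f \<in> edges H"
    let ?e = "inv_into (edges G) \<psi> f"
    have eG: "?e \<in> edges G" using f b2 by (metis bij_betw_def inv_into_into)
    have fe: "\<psi> ?e = f" using f b2 by (metis bij_betw_def f_inv_into_f)
    have sub: "endpts G ?e \<subseteq> verts G" using wf eG unfolding wf_graph_def by blast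
    have "inv_into (verts G) \<phi> ` endpts H f = inv_into (verts G) \<phi> ` \<phi> ` endpts G ?e" using en eG fe by metis
    also have "\<dots> = endpts G ?e" using inv_into_image_cancel[OF _ sub] b1 unfolding bij_betw_def by blast
    finally show "endpts G ?e = inv_into (verts G) \<phi> ` endpts H f" by simp
  qed
  then show ?thesis unfolding iso_maps_def using bij_betw_inv_into[OF b1] bij_betw_inv_into[OF b2] by blast
qed

lemma iso_reach: "iso_maps G H \<phi> \<psi> \<Longrightarrow> reach G x y \<Longrightarrow> reach H (\<phi> x) (\<phi> y)"
  unfolding reach_def by (metis iso_wk wk_ne hd_map last_map)

lemma iso_gdist: "iso_maps G H \<phi> \<psi> \<Longrightarrow> reach G x y \<Longrightarrow> gdist H (\<phi> x) (\<phi> y) \<le> gdist G x y"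
proof -
  assume i: "iso_maps G H \<phi> \<psi>" and r: "reach G x y"
  from gdist_ex[OF r] obtain vs es where W: "wk G vs es" "hd vs = x" "last vs = y" "length es = gdist G x y" by blast
  have w: "wk H (map \<phi> vs) (map \<psi> es)" using iso_wk[OF i W(1)] .
  have ne: "vs \<noteq> []" using wk_ne W(1) by metis
  show ?thesis using gdist_le[OF w] W ne by (simp add: hd_map last_map)
qed

lemma Good_iso:
  assumes i: "iso_maps G H \<phi> \<psi>" and i': "iso_maps H G \<phi>' \<psi>'"
    and inv1: "\<forall>x\<in>verts G. \<phi>' (\<phi> x) = x" and inv2: "\<forall>y\<in>verts H. \<phi> (\<phi>' y) = y"
    and fin: "finite (verts H)" and g: "Good K G"
  shows "Good K H"
proof -
  obtain x0 where x0: "x0 \<in> verts G" and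
    gx: "\<And>vs es. geo G vs es \<Longrightarrow> hd vs \<in> gcomp G x0 \<Longrightarrow> length vs + K \<le> card (gcomp G x0)"
    using g unfolding Good_def by blast
  have b1: "bij_betw \<phi> (verts G) (verts H)" using i unfolding iso_maps_def by blast
  have b1': "bij_betw \<phi>' (verts H) (verts G)" using i' unfolding iso_maps_def by blast
  have px0: "\<phi> x0 \<in> verts H" using b1 x0 bij_betwE by blast
  have cardle: "card (gcomp G x0) \<le> card (gcomp H (\<phi> x0))"
  proof -
    have "\<phi> ` gcomp G x0 \<subseteq> gcomp H (\<phi> x0)" using iso_reach[OF i] unfolding gcomp_def by blast
    moreover have "inj_on \<phi> (gcomp G x0)" using b1 gcomp_sub unfolding bij_betw_def by (metis inj_on_subset)
    moreover have "finite (gcomp H (\<phi> x0))" using finite_subset[OF gcomp_sub fin] .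
    ultimately show ?thesis by (metis card_image card_mono)
  qed
  have "\<forall>vs es. geo H vs es \<and> hd vs \<in> gcomp H (\<phi> x0) \<longrightarrow> length vs + K \<le> card (gcomp H (\<phi> x0))"
  proof (intro allI impI, elim conjE)
    fix vs es assume geo: "geo H vs es" and h: "hd vs \<in> gcomp H (\<phi> x0)"
    have wv: "wk H vs es" "distinct vs" "length es = gdist H (hd vs) (last vs)"
      using geo unfolding geo_def by blast+
    have vne: "vs \<noteq> []" using wk_ne wv by metis
    have sv: "set vs \<subseteq> verts H" using wk_verts wv(1) by metis
    let ?ms = "map \<phi>' vs" and ?ns = "map \<psi>' es"
    have wm: "wk G ?ms ?ns" using iso_wk[OF i' wv(1)] .
    have dm: "distinct ?ms" using wv(2) sv b1' unfolding bij_betw_def by (metis distinct_map inj_on_subset)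
    have hm: "hd ?ms = \<phi>' (hd vs)" and lm: "last ?ms = \<phi>' (last vs)" using vne by (simp_all add: hd_map last_map)
    have rm: "reach G (hd ?ms) (last ?ms)" unfolding reach_def using wm by blast
    have "gdist H (\<phi> (hd ?ms)) (\<phi> (last ?ms)) \<le> gdist G (hd ?ms) (last ?ms)" using iso_gdist[OF i rm] .
    moreover have "\<phi> (hd ?ms) = hd vs" "\<phi> (last ?ms) = last vs" using hm lm inv2 sv vne hd_in_set last_in_set by (metis subsetD)+
    ultimately have "length es \<le> gdist G (hd ?ms) (last ?ms)" using wv(3) by simp
    moreover have "gdist G (hd ?ms) (last ?ms) \<le> length ?ns" using gdist_le[OF wm] .
    ultimately have "length ?ns = gdist G (hd ?ms) (last ?ms)" by simp
    then have gm: "geo G ?ms ?ns" unfolding geo_def using wm dm by blast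
    have "reach H (\<phi> x0) (hd vs)" using h unfolding gcomp_def by simp
    then have "reach G (\<phi>' (\<phi> x0)) (\<phi>' (hd vs))" using iso_reach[OF i'] by blast
    then have "hd ?ms \<in> gcomp G x0" using inv1 x0 hm unfolding gcomp_def by simp
    then have "length ?ms + K \<le> card (gcomp G x0)" using gx[OF gm] by blast
    then show "length vs + K \<le> card (gcomp H (\<phi> x0))" using cardle by simp
  qed
  then show ?thesis unfolding Good_def using px0 by blast
qed


lemma diam_set: "{gdist G u v | u v. u \<in> verts G \<and> v \<in> verts G} = (\<lambda>p. gdist G (fst p) (snd p)) ` (verts G \<times> verts G)"
proof (rule set_eqI, rule iffI)
  fix k assume "k \<in> {gdist G u v | u v. u \<in> verts G \<and> v \<in> verts G}"
  then obtain u v where "k = gdist G u v" "u \<in> verts G" "v \<in> verts G" by blast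
  then show "k \<in> (\<lambda>p. gdist G (fst p) (snd p)) ` (verts G \<times> verts G)"
    by (intro image_eqI[of _ _ "(u, v)"]) auto
qed (clarsimp, blast)

lemma diam_ge: "finite (verts G) \<Longrightarrow> u \<in> verts G \<Longrightarrow> v \<in> verts G \<Longrightarrow> gdist G u v \<le> diam G"
proof -
  assume a: "finite (verts G)" "u \<in> verts G" "v \<in> verts G"
  have "gdist G u v \<in> (\<lambda>p. gdist G (fst p) (snd p)) ` (verts G \<times> verts G)"
    by (rule image_eqI[of _ _ "(u, v)"]) (use a in auto)
  then show ?thesis unfolding diam_def diam_set by (rule Max_ge[rotated]) (use a in auto)
qed

lemma diam_ex: "finite (verts G) \<Longrightarrow> verts G \<noteq> {} \<Longrightarrow> \<exists>u\<in>verts G. \<exists>v\<in>verts G. diam G = gdist G u v"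
proof -
  assume f: "finite (verts G)" and ne: "verts G \<noteq> {}"
  have "diam G \<in> (\<lambda>p. gdist G (fst p) (snd p)) ` (verts G \<times> verts G)"
    unfolding diam_def diam_set by (rule Max_in) (use f ne in auto)
  then show ?thesis by force
qed

lemma connected_reach: "connected_graph G \<longleftrightarrow> (\<forall>u\<in>verts G. \<forall>v\<in>verts G. reach G u v)"
  unfolding connected_graph_def reach_def is_walk_wk ..

lemma Good_conn:
  assumes wf: "wf_graph G" and c: "connected_graph G"
  shows "Good (card (verts G) - diam G - 1) G"
proof -
  have fin: "finite (verts G)" and ne: "verts G \<noteq> {}" using wf unfolding wf_graph_def by blast+
  obtain x where x: "x \<in> verts G" using ne by blast
  have C: "gcomp G x = verts G" using gcomp_sub[of G x] c x unfolding connected_reach gcomp_def by blast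
  have "\<forall>vs es. geo G vs es \<and> hd vs \<in> gcomp G x \<longrightarrow> length vs + (card (verts G) - diam G - 1) \<le> card (gcomp G x)"
  proof (intro allI impI, elim conjE)
    fix vs es assume geo: "geo G vs es"
    have wv: "wk G vs es" "distinct vs" "length es = gdist G (hd vs) (last vs)"
      using geo unfolding geo_def by blast+
    have vne: "vs \<noteq> []" using wk_ne wv by metis
    have sv: "set vs \<subseteq> verts G" using wk_verts wv(1) by metis
    have "length es \<le> diam G" using diam_ge[OF fin] sv vne wv(3) by (metis hd_in_set last_in_set subsetD)
    moreover have "length vs \<le> card (verts G)" using distinct_len_le[OF wv(2) sv fin] .
    moreover have "length vs = Suc (length es)" using wk_len wv(1) by metis
    ultimately show "length vs + (card (verts G) - diam G - 1) \<le> card (gcomp G x)" using C by simp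
  qed
  then show ?thesis unfolding Good_def using x by blast
qed

lemma has_cycle_wk: "has_cycle G \<longleftrightarrow> (\<exists>vs es e. wk G vs es \<and> distinct vs \<and> es \<noteq> [] \<and> e \<in> edges G \<and> e \<notin> set es \<and>
     endpts G e = {hd vs, last vs})"
  unfolding has_cycle_def is_path_def is_walk_wk by (simp only: conj_assoc)

lemma distinct_hd_last: "distinct vs \<Longrightarrow> vs = x # y # r \<Longrightarrow> hd vs \<noteq> last vs"
  by (cases r rule: rev_cases) auto

lemma path_unique:
  "\<not> has_cycle G \<Longrightarrow> wk G vs es \<Longrightarrow> distinct vs \<Longrightarrow> wk G vs' es' \<Longrightarrow> distinct vs' \<Longrightarrow>
   hd vs = hd vs' \<Longrightarrow> last vs = last vs' \<Longrightarrow> vs = vs' \<and> es = es'"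
proof (induction vs arbitrary: es vs' es')
  case Nil
  then show ?case by (auto dest: wk_ne)
next
  case (Cons u rest)
  obtain u' rest' where vs': "vs' = u' # rest'" using Cons.prems(4) wk_ne by (cases vs') auto
  have uu: "u' = u" using Cons.prems(6) vs' by simp
  show ?case
  proof (cases rest)
    case Nil
    have "rest' = []"
    proof (rule ccontr)
      assume "rest' \<noteq> []"
      then obtain y r where "rest' = y # r" by (cases rest') auto
      then have "hd vs' \<noteq> last vs'" using distinct_hd_last Cons.prems(5) vs' by metis
      then show False using Cons.prems(6,7) Nil by simp
    qed
    then have v1: "vs' = [u]" using vs' uu by simp
    have "length es = 0" using wk_len[OF Cons.prems(2)] Nil by simp
    moreover have "length es' = 0" using wk_len[OF Cons.prems(4)] v1 by simp
    ultimately show ?thesis using v1 Nil by simp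
  next
    case (Cons w r)
    note rest = this
    obtain e esr where es: "es = e # esr" using Cons.prems(2) rest by (cases es) auto
    have w1: "u \<in> verts G" "e \<in> edges G" "endpts G e = {u, w}" "wk G (w # r) esr"
      using Cons.prems(2) rest es by auto
    have rest'ne: "rest' \<noteq> []"
    proof
      assume "rest' = []"
      then have "hd (u # rest) = last (u # rest)" using Cons.prems(6,7) vs' uu by simp
      then show False using distinct_hd_last Cons.prems(3) rest by metis
    qed
    then obtain w' r' where rest': "rest' = w' # r'" by (cases rest') auto
    obtain e' esr' where es': "es' = e' # esr'" using Cons.prems(4) vs' rest' by (cases es') auto
    have w2: "e' \<in> edges G" "endpts G e' = {u, w'}" "wk G (w' # r') esr'"
      using Cons.prems(4) vs' rest' es' uu by auto
    have du: "u \<notin> set (w # r)" "distinct (w # r)" using Cons.prems(3) rest by auto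
    have du': "u \<notin> set (w' # r')" "distinct (w' # r')" using Cons.prems(5) vs' rest' uu by auto
    have ll: "last (w # r) = last (w' # r')" using Cons.prems(7) vs' rest rest' by simp
    show ?thesis
    proof (cases "w = w'")
      case True
      show ?thesis
      proof (cases "e = e'")
        case True
        have "w # r = w' # r' \<and> esr = esr'"
          using Cons.IH[unfolded rest, OF Cons.prems(1) w1(4) du(2) w2(3) du'(2)] \<open>w = w'\<close> ll by simp
        then show ?thesis using vs' rest rest' es es' uu True by simp
      next
        case False
        have "has_cycle G" unfolding has_cycle_wk
          by (rule exI[of _ "[u, w]"], rule exI[of _ "[e]"], rule exI[of _ e'])
             (use w1 w2 False \<open>w = w'\<close> du wk_verts[OF w1(4)] in auto)
        then show ?thesis using Cons.prems(1) by blast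
      qed
    next
      case False
      have wr: "wk G (rev (w' # r')) (rev esr')" using wk_rev[OF w2(3)] .
      have X: "wk G ((w # r) @ tl (rev (w' # r'))) (esr @ rev esr')"
        by (rule wk_app[OF w1(4) wr]) (simp only: hd_rev ll)
      have hX: "hd ((w # r) @ tl (rev (w' # r'))) = w" by simp
      have lX: "last ((w # r) @ tl (rev (w' # r'))) = w'"
      proof (cases "tl (rev (w' # r')) = []")
        case True
        then have "r' = []" by (cases r' rule: rev_cases) auto
        then show ?thesis using ll by simp
      next
        case False
        then have "last (tl (rev (w' # r'))) = w'"
          by (metis last_rev last_tl list.distinct(1) rev_is_Nil_conv hd_rev last.simps list.sel(1))
        then show ?thesis using False by simp
      qed
      have "set (tl (rev (w' # r'))) \<subseteq> set (rev (w' # r'))" by (cases "rev (w' # r')") auto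
      then have uX: "u \<notin> set ((w # r) @ tl (rev (w' # r')))" using du du' by auto
      from wk_to_path[OF X] obtain ys fs where Y: "wk G ys fs" "distinct ys" "hd ys = w" "last ys = w'"
        "set ys \<subseteq> set ((w # r) @ tl (rev (w' # r')))" "set fs \<subseteq> set (esr @ rev esr')"
        using hX lX by metis
      have yne: "ys \<noteq> []" using wk_ne Y(1) by metis
      have uY: "u \<notin> set ys" using Y(5) uX by blast
      have wc: "wk G (u # ys) (e # fs)" by (rule wk_cons[OF Y(1) w1(1) w1(2)]) (use w1(3) Y(3) in simp)
      have e'e: "e' \<noteq> e"
      proof
        assume "e' = e"
        then have "{u, w'} = {u, w}" using w1(3) w2(2) by simp
        then show False using False du du' by (auto simp: doubleton_eq_iff)
      qed
      have e'f: "e' \<notin> set fs"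
      proof
        assume "e' \<in> set fs"
        then have "e' \<in> set esr \<or> e' \<in> set esr'" using Y(6) by auto
        then have "endpts G e' \<subseteq> set (w # r) \<or> endpts G e' \<subseteq> set (w' # r')"
          using wk_endpts[OF w1(4)] wk_endpts[OF w2(3)] by blast
        then show False using w2(2) du(1) du'(1) by blast
      qed
      have "has_cycle G" unfolding has_cycle_wk
        by (rule exI[of _ "u # ys"], rule exI[of _ "e # fs"], rule exI[of _ e'])
           (use wc Y uY e'e e'f w2 yne in auto)
      then show ?thesis using Cons.prems(1) by blast
    qed
  qed
qed

lemma tree_usp:
  assumes t: "is_tree T"
  shows "\<exists>vs es. is_usp T vs es \<and> length vs = diam T + 1"
proof -
  have wf: "wf_graph T" and c: "connected_graph T" and nc: "\<not> has_cycle T" using t unfolding is_tree_def by blast+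
  have fin: "finite (verts T)" and ne: "verts T \<noteq> {}" using wf unfolding wf_graph_def by blast+
  obtain a b where ab: "a \<in> verts T" "b \<in> verts T" "diam T = gdist T a b" using diam_ex[OF fin ne] by blast
  have "reach T a b" using c ab unfolding connected_reach by blast
  from geo_ex[OF this] obtain vs es where P: "geo T vs es" "hd vs = a" "last vs = b" by blast
  have wv: "wk T vs es" "distinct vs" "length es = gdist T a b" using P unfolding geo_def by auto
  have "is_usp T vs es" unfolding is_usp_wk
  proof (intro conjI allI impI)
    fix vs' es' assume "wk T vs' es' \<and> distinct vs' \<and> hd vs' = hd vs \<and> last vs' = last vs \<and> length vs' \<le> length vs"
    then have "vs = vs' \<and> es = es'" using path_unique[OF nc wv(1) wv(2)] by metis
    then show "vs' = vs" "es' = es" by simp_all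
  qed (use wv in auto)
  moreover have "length vs = diam T + 1" using wk_len[OF wv(1)] wv(3) ab(3) by simp
  ultimately show ?thesis by blast
qed

lemma iso_usp:
  assumes i: "iso_maps G H \<phi> \<psi>" and i': "iso_maps H G \<phi>' \<psi>'"
    and inv1: "\<forall>x\<in>verts G. \<phi>' (\<phi> x) = x" and inv2: "\<forall>y\<in>verts H. \<phi> (\<phi>' y) = y"
    and inv3: "\<forall>f\<in>edges H. \<psi> (\<psi>' f) = f"
    and u: "is_usp G vs es"
  shows "is_usp H (map \<phi> vs) (map \<psi> es)"
proof -
  have wv: "wk G vs es" "distinct vs" and
    un: "\<And>vs' es'. wk G vs' es' \<Longrightarrow> distinct vs' \<Longrightarrow> hd vs' = hd vs \<Longrightarrow> last vs' = last vs \<Longrightarrow>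
       length vs' \<le> length vs \<Longrightarrow> vs' = vs \<and> es' = es"
    using u unfolding is_usp_wk by blast+
  have vne: "vs \<noteq> []" using wk_ne wv by metis
  have sv: "set vs \<subseteq> verts G" using wk_verts wv(1) by metis
  have b1: "bij_betw \<phi> (verts G) (verts H)" using i unfolding iso_maps_def by blast
  have b1': "bij_betw \<phi>' (verts H) (verts G)" using i' unfolding iso_maps_def by blast
  have w: "wk H (map \<phi> vs) (map \<psi> es)" using iso_wk[OF i wv(1)] .
  have d: "distinct (map \<phi> vs)" using wv(2) sv b1 unfolding bij_betw_def by (metis distinct_map inj_on_subset)
  have "\<forall>vs' es'. wk H vs' es' \<and> distinct vs' \<and> hd vs' = hd (map \<phi> vs) \<and> last vs' = last (map \<phi> vs) \<and>
      length vs' \<le> length (map \<phi> vs) \<longrightarrow> vs' = map \<phi> vs \<and> es' = map \<psi> es"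
  proof (intro allI impI, elim conjE)
    fix vs' es' assume a: "wk H vs' es'" "distinct vs'" "hd vs' = hd (map \<phi> vs)" "last vs' = last (map \<phi> vs)"
      "length vs' \<le> length (map \<phi> vs)"
    have vne': "vs' \<noteq> []" using wk_ne a(1) by metis
    have sv': "set vs' \<subseteq> verts H" using wk_verts a(1) by metis
    have se': "set es' \<subseteq> edges H" using wk_edges a(1) by metis
    have wm: "wk G (map \<phi>' vs') (map \<psi>' es')" using iso_wk[OF i' a(1)] .
    have dm: "distinct (map \<phi>' vs')" using a(2) sv' b1' unfolding bij_betw_def by (metis distinct_map inj_on_subset)
    have "hd (map \<phi>' vs') = \<phi>' (\<phi> (hd vs))" using a(3) vne vne' by (simp add: hd_map)
    then have h: "hd (map \<phi>' vs') = hd vs" using inv1 sv vne by (metis hd_in_set subsetD)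
    have "last (map \<phi>' vs') = \<phi>' (\<phi> (last vs))" using a(4) vne vne' by (simp add: last_map)
    then have l: "last (map \<phi>' vs') = last vs" using inv1 sv vne by (metis last_in_set subsetD)
    have "map \<phi>' vs' = vs \<and> map \<psi>' es' = es" using un[OF wm dm h l] a(5) by simp
    moreover have "map \<phi> (map \<phi>' vs') = vs'" using inv2 sv' by (induction vs') auto
    moreover have "map \<psi> (map \<psi>' es') = es'" using inv3 se' by (induction es') auto
    ultimately show "vs' = map \<phi> vs \<and> es' = map \<psi> es" by metis
  qed
  then show ?thesis unfolding is_usp_wk using w d by blast
qed

lemma iso_inv_facts:
  assumes "iso_maps G H \<phi> \<psi>"
  shows "\<forall>x\<in>verts G. inv_into (verts G) \<phi> (\<phi> x) = x" "\<forall>y\<in>verts H. \<phi> (inv_into (verts G) \<phi> y) = y"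
    "\<forall>f\<in>edges H. \<psi> (inv_into (edges G) \<psi> f) = f"
  using assms unfolding iso_maps_def bij_betw_def by (auto simp: f_inv_into_f)


lemma lower_bound:
  fixes T :: "('v, 'e) mgraph" and H :: "('w, 'f) mgraph"
  assumes t: "is_tree T" and wfH: "wf_graph H" and m: "is_minor T H"
  shows "card (verts T) - diam T - 1 \<le> sp H"
proof -
  have wf: "wf_graph T" and c: "connected_graph T" using t unfolding is_tree_def by blast+
  obtain H' where R: "(\<lambda>A B. minor_step A B \<and> wf_graph B)\<^sup>*\<^sup>* H H'" and gi: "graph_iso T H'"
    using m unfolding is_minor_def by blast
  obtain \<phi> \<psi> where i: "iso_maps T H' \<phi> \<psi>" using gi unfolding graph_iso_maps by blast
  have wfH': "wf_graph H'" using wf_rtranclp[OF R wfH] .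
  have finH': "finite (verts H')" using wfH' unfolding wf_graph_def by blast
  have gT: "Good (card (verts T) - diam T - 1) T" using Good_conn[OF wf c] .
  have gH': "Good (card (verts T) - diam T - 1) H'"
    using Good_iso[OF i iso_sym[OF wf i] iso_inv_facts(1)[OF i] iso_inv_facts(2)[OF i] finH' gT] .
  have "Good (card (verts T) - diam T - 1) H" using Good_rtranclp[OF R wfH gH'] .
  then show ?thesis using Good_sp[OF wfH] by blast
qed

lemma upper_host:
  fixes T :: "('v, 'e) mgraph"
  assumes t: "is_tree T"
  shows "\<exists>H :: (nat, nat) mgraph. wf_graph H \<and> is_minor T H \<and> sp H \<le> card (verts T) - diam T - 1"
proof -
  have wf: "wf_graph T" using t unfolding is_tree_def by blast
  have fin: "finite (verts T)" and ne: "verts T \<noteq> {}" and finE: "finite (edges T)"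
    and en: "\<forall>e\<in>edges T. endpts T e \<subseteq> verts T \<and> card (endpts T e) = 2"
    using wf unfolding wf_graph_def by blast+
  let ?n = "card (verts T)" and ?m = "card (edges T)"
  obtain g where g: "bij_betw g {0..<?n} (verts T)" using ex_bij_betw_nat_finite[OF fin] by blast
  obtain h where h: "bij_betw h {0..<?m} (edges T)" using ex_bij_betw_nat_finite[OF finE] by blast
  define \<phi> where "\<phi> = inv_into {0..<?n} g"
  define \<psi> where "\<psi> = inv_into {0..<?m} h"
  define H0 :: "(nat, nat) mgraph" where "H0 = ({0..<?n}, {0..<?m}, \<lambda>f. \<phi> ` endpts T (h f))"
  have bphi: "bij_betw \<phi> (verts T) {0..<?n}" unfolding \<phi>_def using bij_betw_inv_into[OF g] .
  have bpsi: "bij_betw \<psi> (edges T) {0..<?m}" unfolding \<psi>_def using bij_betw_inv_into[OF h] .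
  have hpsi: "\<And>e. e \<in> edges T \<Longrightarrow> h (\<psi> e) = e" unfolding \<psi>_def using h
    by (metis bij_betw_imp_surj_on f_inv_into_f)
  have i: "iso_maps T H0 \<phi> \<psi>" unfolding iso_maps_def H0_def using bphi bpsi hpsi by simp
  have wfH0: "wf_graph H0"
  proof -
    have "0 < ?n" using fin ne by (simp add: card_gt_0_iff)
    moreover have "\<forall>f\<in>{0..<?m}. \<phi> ` endpts T (h f) \<subseteq> {0..<?n} \<and> card (\<phi> ` endpts T (h f)) = 2"
    proof
      fix f assume f: "f \<in> {0..<?m}"
      have hf: "h f \<in> edges T" using h f bij_betwE by blast
      have sub: "endpts T (h f) \<subseteq> verts T" and c2: "card (endpts T (h f)) = 2" using en hf by blast+
      have "\<phi> ` endpts T (h f) \<subseteq> {0..<?n}" using sub bphi bij_betwE by blast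
      moreover have "inj_on \<phi> (endpts T (h f))" using bphi sub unfolding bij_betw_def by (metis inj_on_subset)
      ultimately show "\<phi> ` endpts T (h f) \<subseteq> {0..<?n} \<and> card (\<phi> ` endpts T (h f)) = 2"
        using c2 card_image by metis
    qed
    ultimately show ?thesis unfolding wf_graph_def H0_def by auto
  qed
  have minor: "is_minor T H0" unfolding is_minor_def graph_iso_maps using i by blast
  obtain vs es where u: "is_usp T vs es" "length vs = diam T + 1" using tree_usp[OF t] by blast
  have uH: "is_usp H0 (map \<phi> vs) (map \<psi> es)"
    using iso_usp[OF i iso_sym[OF wf i] iso_inv_facts[OF i] u(1)] .
  have "diam T + 1 \<le> usp H0" using usp_ge[OF wfH0 uH] u(2) by simp
  moreover have "card (verts H0) = ?n" unfolding H0_def by simp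
  ultimately have "sp H0 \<le> ?n - diam T - 1" unfolding sp_def by simp
  then show ?thesis using wfH0 minor by blast
qed

theorem theorem4p2:
  fixes T :: "('v, 'e) mgraph"
  assumes "is_tree T"
  shows "spec_floor T = card (verts T) - diam T - 1"
proof -
  obtain H0 :: "(nat, nat) mgraph" where H0: "wf_graph H0" "is_minor T H0" "sp H0 \<le> card (verts T) - diam T - 1"
    using upper_host[OF assms] by blast
  have "card (verts T) - diam T - 1 \<le> sp H0" using lower_bound[OF assms H0(1,2)] .
  then have eq: "sp H0 = card (verts T) - diam T - 1" using H0(3) by simp
  show ?thesis unfolding spec_floor_def
  proof (rule Least_equality)
    show "\<exists>H :: (nat, nat) mgraph. wf_graph H \<and> is_minor T H \<and> card (verts T) - diam T - 1 = sp H"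
      using H0 eq by metis
  next
    fix s assume "\<exists>H :: (nat, nat) mgraph. wf_graph H \<and> is_minor T H \<and> s = sp H"
    then show "card (verts T) - diam T - 1 \<le> s" using lower_bound[OF assms] by blast
  qed
qed

end
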